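(* Let $d\ge1$, $n\ge 2d+3$, and let $M$ be a missing $d$-face of $\mathcal{C}(\partial C_{2d+1}(n))$. Then $(\Delta_{2d+2})^{\le d}$ is a minor of $\mathcal{C}(\partial C_{2d+1}(n))^{\le d}\cup\{M\}$.
   Context: $\mathcal{C}(\partial C_{2d+1}(n))$ is the boundary complex of the cyclic $(2d+1)$-polytope on vertex set $[n]$; by Gale's evenness condition it is the simplicial complex on $[n]$ whose maximal simplices are the $(2d+1)$-element sets $S\subseteq[n]$ such that for all $i<j$ in $[n]\setminus S$ the number of elements of $S$ strictly between $i$ and $j$ is even. $K^{\le k}$ is the subcomplex of simplices of dimension at most $k$ (dimension of $F$ is $|F|-1$). A missing $k$-face of $K$ is a $(k+1)$-subset $M\subseteq V(K)$ with $M\notin K$ but all proper subsets of $M$ in $K$. $\Delta_m$ is the complex of all subsets of an $(m+1)$-element set. Minors (Nevo): a deletion replaces $K$ by a subcomplex; an admissible contraction identifies two distinct vertices $u,v$ of $K$ such that no missing $k$-face of $K$ with $k\le\dim K$ contains both $u$ and $v$, producing $L=\{F\in K: u\notin F\}\cup\{(F\setminus\{u\})\cup\{v\}: u\in F\in K\}$. $L$ is a minor of $K$ if it is obtained (up to isomorphism) from $K$ by a finite sequence of deletions and admissible contractions. *)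

theory Defs
  imports Main
begin

definition simplicial_complex :: "nat set set \<Rightarrow> bool" where
  "simplicial_complex K \<longleftrightarrow> finite K \<and> (\<forall>F\<in>K. finite F) \<and> (\<forall>F\<in>K. \<forall>G. G \<subseteq> F \<longrightarrow> G \<in> K)"

definition verts :: "nat set set \<Rightarrow> nat set" where
  "verts K = \<Union>K"

definition cdim :: "nat set set \<Rightarrow> int" where
  "cdim K = int (Max (card ` K)) - 1"

definition skeleton :: "nat \<Rightarrow> nat set set \<Rightarrow> nat set set" where
  "skeleton k K = {F \<in> K. card F \<le> k + 1}"

definition missing_face :: "nat set set \<Rightarrow> nat \<Rightarrow> nat set \<Rightarrow> bool" where
  "missing_face K k M \<longleftrightarrow> M \<subseteq> verts K \<and> card M = k + 1 \<and> M \<notin> K \<and> (\<forall>G. G \<subset> M \<longrightarrow> G \<in> K)"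

definition simplex :: "nat \<Rightarrow> nat set set" where
  "simplex m = Pow {0..m}"

(* Gale's evenness condition: maximal simplices of the boundary of C_{2d+1}(n) *)
definition gale_facet :: "nat \<Rightarrow> nat \<Rightarrow> nat set \<Rightarrow> bool" where
  "gale_facet d n S \<longleftrightarrow> S \<subseteq> {1..n} \<and> card S = 2*d + 1 \<and>
     (\<forall>i j. i \<in> {1..n} - S \<longrightarrow> j \<in> {1..n} - S \<longrightarrow> i < j \<longrightarrow>
        even (card {k \<in> S. i < k \<and> k < j}))"

definition cyclic_boundary :: "nat \<Rightarrow> nat \<Rightarrow> nat set set" where
  "cyclic_boundary d n = {F. \<exists>S. gale_facet d n S \<and> F \<subseteq> S}"

definition deletion_step :: "nat set set \<Rightarrow> nat set set \<Rightarrow> bool" where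
  "deletion_step K L \<longleftrightarrow> simplicial_complex L \<and> L \<subseteq> K"

definition admissible_pair :: "nat set set \<Rightarrow> nat \<Rightarrow> nat \<Rightarrow> bool" where
  "admissible_pair K u v \<longleftrightarrow> u \<in> verts K \<and> v \<in> verts K \<and> u \<noteq> v \<and>
     \<not> (\<exists>k M. int k \<le> cdim K \<and> missing_face K k M \<and> u \<in> M \<and> v \<in> M)"

definition contract :: "nat set set \<Rightarrow> nat \<Rightarrow> nat \<Rightarrow> nat set set" where
  "contract K u v = {F \<in> K. u \<notin> F} \<union> {(F - {u}) \<union> {v} | F. F \<in> K \<and> u \<in> F}"

definition contraction_step :: "nat set set \<Rightarrow> nat set set \<Rightarrow> bool" where
  "contraction_step K L \<longleftrightarrow> (\<exists>u v. admissible_pair K u v \<and> L = contract K u v)"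

inductive minor_steps :: "nat set set \<Rightarrow> nat set set \<Rightarrow> bool" where
  refl: "minor_steps K K"
| del: "minor_steps K L \<Longrightarrow> deletion_step L L' \<Longrightarrow> minor_steps K L'"
| con: "minor_steps K L \<Longrightarrow> contraction_step L L' \<Longrightarrow> minor_steps K L'"

definition iso_complex :: "nat set set \<Rightarrow> nat set set \<Rightarrow> bool" where
  "iso_complex K L \<longleftrightarrow> (\<exists>f. inj_on f (verts K) \<and> (`) f ` K = L)"

definition is_minor :: "nat set set \<Rightarrow> nat set set \<Rightarrow> bool" where
  "is_minor L K \<longleftrightarrow> (\<exists>L'. minor_steps K L' \<and> iso_complex L' L)"

end

theory Submission imports Defs begin

lemma pairs:
  fixes l :: nat
  assumes "1 \<le> l" "2*d + l \<le> n + 1" "F \<subseteq> {l..n}"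
    "card F \<le> d \<or> n + 1 = 2*d + l \<or> (card F \<le> d+1 \<and> (\<exists>a. a\<in>F \<and> Suc a \<in> F))"
  shows "\<exists>A. A \<subseteq> {l..<n} \<and> card A = d \<and> (\<forall>a\<in>A. Suc a \<notin> A) \<and> F \<subseteq> (\<Union>a\<in>A. {a, Suc a})"
  using assms
proof (induction n arbitrary: d F rule: less_induct)
  case (less n)
  have fin: "finite F" using less.prems(3) finite_subset by blast
  show ?case
  proof (cases d)
    case 0
    have "F = {}"
    proof -
      { assume "card F \<le> 0" hence ?thesis using fin by simp }
      moreover
      { assume "n + 1 = 2*d + l" hence ?thesis using less.prems(3) 0 by auto }
      moreover
      { assume "card F \<le> d+1 \<and> (\<exists>a. a\<in>F \<and> Suc a \<in> F)"
        then obtain a where a: "a \<in> F" "Suc a \<in> F" "card F \<le> 1" using 0 by auto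
        have "card {a, Suc a} \<le> card F" using a fin by (intro card_mono) auto
        hence False using a by simp }
      ultimately show ?thesis using less.prems(4) 0 by auto
    qed
    then show ?thesis using 0 by (intro exI[of _ "{}"]) auto
  next
    case (Suc d')
    have nge: "n \<ge> 2*d' + l + 1" using less.prems Suc by simp
    show ?thesis
    proof (cases "n \<in> F \<or> n + 1 = 2*d + l")
      case True
      define F'' where "F'' = F - {n-1, n}"
      have F''sub: "F'' \<subseteq> {l..n-2}" using less.prems(3) by (force simp: F''_def)
      have cond: "card F'' \<le> d' \<or> n - 2 + 1 = 2*d' + l \<or> (card F'' \<le> d'+1 \<and> (\<exists>a. a\<in>F'' \<and> Suc a \<in> F''))"
      proof (cases "n + 1 = 2*d + l")
        case True then show ?thesis using Suc nge less.prems(1) by simp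
      next
        case False
        hence nF: "n \<in> F" using \<open>n \<in> F \<or> n + 1 = 2*d + l\<close> by simp
        show ?thesis
        proof (cases "n - 1 \<in> F")
          case True
          have "card F'' = card F - 2"
          proof -
            have "F \<inter> {n-1,n} = {n-1,n}" using True nF by auto
            moreover have "card {n-1,n} = 2" using nge by simp
            ultimately show ?thesis unfolding F''_def using fin
              by (metis card_Diff_subset_Int finite.emptyI finite.insertI)
          qed
          then show ?thesis using less.prems(4) False Suc by auto
        next
          case False
          have eq: "F'' = F - {n}" using False by (auto simp: F''_def)
          have c: "card F'' = card F - 1" using eq nF fin by simp
          from less.prems(4) \<open>\<not> (n + 1 = 2*d + l)\<close>
          consider "card F \<le> d" | "card F \<le> d+1" "\<exists>a. a\<in>F \<and> Suc a \<in> F" by auto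
          then show ?thesis
          proof cases
            case 1 then have "card F'' \<le> d'" using c Suc by simp then show ?thesis by simp
          next
            case 2
            then obtain a where a: "a \<in> F" "Suc a \<in> F" by auto
            have "a \<noteq> n - 1" using False a by auto
            moreover have "Suc a \<le> n" using a less.prems(3) by auto
            ultimately have "a \<in> F'' \<and> Suc a \<in> F''" using a eq by auto
            then show ?thesis using 2 c Suc by auto
          qed
        qed
      qed
      have "n - 2 < n" using nge by simp
      moreover have "2 * d' + l \<le> n - 2 + 1" using nge by simp
      ultimately have "\<exists>A. A \<subseteq> {l..<n-2} \<and> card A = d' \<and> (\<forall>a\<in>A. Suc a \<notin> A) \<and> F'' \<subseteq> (\<Union>a\<in>A. {a, Suc a})"
        using less.IH[OF _ less.prems(1) _ F''sub cond] by blast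
      then obtain A'' where A'': "A'' \<subseteq> {l..<n-2}" "card A'' = d'" "\<forall>a\<in>A''. Suc a \<notin> A''"
          "F'' \<subseteq> (\<Union>a\<in>A''. {a, Suc a})"
        by blast
      have A1: "\<forall>a\<in>A''. l \<le> a \<and> a < n - 2" using A''(1) by auto
      have fA: "finite A''" using A''(1) finite_subset by blast
      have nA: "n - 1 \<notin> A''" using A''(1) nge by force
      show ?thesis
      proof (intro exI[of _ "insert (n-1) A''"] conjI)
        show "insert (n - 1) A'' \<subseteq> {l..<n}" using A1 nge by auto
        show "card (insert (n - 1) A'') = d" using fA nA A''(2) Suc by simp
        show "\<forall>a\<in>insert (n - 1) A''. Suc a \<notin> insert (n - 1) A''"
          using A1 A''(3) nge by force
        show "F \<subseteq> (\<Union>a\<in>insert (n - 1) A''. {a, Suc a})"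
          using A''(4) nge unfolding F''_def by auto
      qed
    next
      case False
      have F'sub: "F \<subseteq> {l..n-1}"
      proof
        fix x assume x: "x \<in> F"
        hence "x \<in> {l..n}" using less.prems(3) by blast
        moreover have "x \<noteq> n" using x False by blast
        ultimately show "x \<in> {l..n-1}" by (simp, linarith)
      qed
      have "n - 1 < n" using nge by simp
      moreover have "2*d + l \<le> n - 1 + 1" using nge less.prems(2) False by simp
      moreover have "card F \<le> d \<or> n - 1 + 1 = 2*d + l \<or> (card F \<le> d+1 \<and> (\<exists>a. a\<in>F \<and> Suc a \<in> F))"
        using less.prems(4) False by blast
      ultimately have "\<exists>A. A \<subseteq> {l..<n-1} \<and> card A = d \<and> (\<forall>a\<in>A. Suc a \<notin> A) \<and> F \<subseteq> (\<Union>a\<in>A. {a, Suc a})"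
        using less.IH[OF _ less.prems(1) _ F'sub] by blast
      then obtain A where A: "A \<subseteq> {l..<n-1}" "card A = d" "\<forall>a\<in>A. Suc a \<notin> A"
          "F \<subseteq> (\<Union>a\<in>A. {a, Suc a})" by blast
      have A0: "A \<subseteq> {l..<n}" by (rule order.trans[OF A(1)]) auto
      show ?thesis by (rule exI[of _ A], intro conjI; fact)
    qed
  qed
qed


lemma card_pairs:
  assumes "finite A" "\<forall>a\<in>A. Suc a \<notin> A"
  shows "card (\<Union>a\<in>A. {a, Suc a}) = 2 * card A"
proof -
  have "card (\<Union>a\<in>A. {a, Suc a}) = (\<Sum>a\<in>A. card {a, Suc a})"
    using assms by (intro card_UN_disjoint) auto
  also have "\<dots> = (\<Sum>a\<in>A. 2)" by simp
  finally show ?thesis by simp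
qed

lemma gale_from_pairs:
  assumes fA: "finite A" and sep: "\<forall>a\<in>A. Suc a \<notin> A"
    and P: "P = (\<Union>a\<in>A. {a, Suc a})"
    and sub: "insert e P \<subseteq> {1..n}" and eP: "e \<notin> P" and e: "e = 1 \<or> e = n"
    and cA: "card A = d"
  shows "gale_facet d n (insert e P)"
  unfolding gale_facet_def
proof (intro conjI allI impI)
  show "insert e P \<subseteq> {1..n}" by fact
  have "finite P" using fA P by auto
  then show "card (insert e P) = 2*d + 1" using eP card_pairs[OF fA sep] P cA by simp
next
  fix i j assume i: "i \<in> {1..n} - insert e P" and j: "j \<in> {1..n} - insert e P" and ij: "i < j"
  let ?A' = "{a\<in>A. i < a \<and> a < j}"
  have "{k \<in> insert e P. i < k \<and> k < j} = (\<Union>a\<in>?A'. {a, Suc a})"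
  proof (rule set_eqI, rule iffI)
    fix k assume k: "k \<in> {k \<in> insert e P. i < k \<and> k < j}"
    have "k \<noteq> e" using k e i j by auto
    then have "k \<in> P" using k by auto
    then obtain a where a: "a \<in> A" "k = a \<or> k = Suc a" using P by auto
    have "Suc a \<noteq> j" "a \<noteq> i" using a P i j by auto
    then have "i < a \<and> a < j" using a k by auto
    then show "k \<in> (\<Union>a\<in>?A'. {a, Suc a})" using a by auto
  next
    fix k assume "k \<in> (\<Union>a\<in>?A'. {a, Suc a})"
    then obtain a where a: "a \<in> A" "i < a" "a < j" "k = a \<or> k = Suc a" by auto
    have "Suc a \<noteq> j" using a P j by auto
    then show "k \<in> {k \<in> insert e P. i < k \<and> k < j}" using a P by auto
  qed
  moreover have "card (\<Union>a\<in>?A'. {a, Suc a}) = 2 * card ?A'"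
    using fA sep by (intro card_pairs) auto
  ultimately show "even (card {k \<in> insert e P. i < k \<and> k < j})" by simp
qed

lemma face:
  assumes n: "2*d + 1 \<le> n" and F: "F \<subseteq> {1..n}" and c: "card F \<le> d + 1"
    and cond: "card F \<le> d \<or> 1 \<in> F \<or> n \<in> F \<or> (\<exists>a. a\<in>F \<and> Suc a \<in> F)"
  shows "F \<in> cyclic_boundary d n"
proof -
  have fin: "finite F" using F finite_subset by blast
  show ?thesis
  proof (cases "n \<in> F")
    case True
    have "card (F - {n}) \<le> d" using True fin c by simp
    moreover have "F - {n} \<subseteq> {1..n-1}"
    proof
      fix x assume x: "x \<in> F - {n}"
      hence "x \<in> {1..n}" using F by blast
      then show "x \<in> {1..n-1}" using x by (simp, linarith)
    qed
    ultimately obtain A where A: "A \<subseteq> {1..<n-1}" "card A = d" "\<forall>a\<in>A. Suc a \<notin> A"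
        "F - {n} \<subseteq> (\<Union>a\<in>A. {a, Suc a})"
      using pairs[of 1 d "n-1" "F - {n}"] n by auto
    define P where "P = (\<Union>a\<in>A. {a, Suc a})"
    have fA: "finite A" using A(1) finite_subset by blast
    have A1: "\<forall>a\<in>A. 1 \<le> a \<and> a < n - 1" using A(1) by auto
    have Psub: "P \<subseteq> {1..n-1}" using A1 unfolding P_def by force
    have "gale_facet d n (insert n P)"
    proof (rule gale_from_pairs[OF fA A(3) P_def _ _ _ A(2)])
      show "insert n P \<subseteq> {1..n}" using Psub n by (force simp: subset_iff)
      show "n \<notin> P" using Psub n by (force simp: subset_iff)
    qed simp
    moreover have "F \<subseteq> insert n P" using A(4) P_def by auto
    ultimately show ?thesis unfolding cyclic_boundary_def by blast
  next
    case nF: False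
    define F' where "F' = F - {1}"
    have F'sub: "F' \<subseteq> {2..n}"
    proof
      fix x assume x: "x \<in> F'"
      hence "x \<in> {1..n}" using F F'_def by blast
      moreover have "x \<noteq> 1" using x F'_def by blast
      ultimately show "x \<in> {2..n}" by auto
    qed
    have cond': "card F' \<le> d \<or> n + 1 = 2*d + 2 \<or> (card F' \<le> d+1 \<and> (\<exists>a. a\<in>F' \<and> Suc a \<in> F'))"
    proof (cases "1 \<in> F")
      case True
      then have "card F' \<le> d" using fin c F'_def by simp
      then show ?thesis by simp
    next
      case False
      then have "F' = F" using F'_def by simp
      then show ?thesis using cond nF False c by auto
    qed
    obtain A where A: "A \<subseteq> {2..<n}" "card A = d" "\<forall>a\<in>A. Suc a \<notin> A"
        "F' \<subseteq> (\<Union>a\<in>A. {a, Suc a})"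
      using pairs[of 2 d n F', OF _ _ F'sub cond'] n by auto
    define P where "P = (\<Union>a\<in>A. {a, Suc a})"
    have fA: "finite A" using A(1) finite_subset by blast
    have A1: "\<forall>a\<in>A. 2 \<le> a \<and> a < n" using A(1) by auto
    have Psub: "P \<subseteq> {2..n}" using A1 unfolding P_def by force
    have "gale_facet d n (insert 1 P)"
    proof (rule gale_from_pairs[OF fA A(3) P_def _ _ _ A(2)])
      show "insert 1 P \<subseteq> {1..n}" using Psub n by (force simp: subset_iff)
      show "1 \<notin> P" using Psub by (force simp: subset_iff)
    qed simp
    moreover have "F \<subseteq> insert 1 P" using A(4) P_def F'_def by auto
    ultimately show ?thesis unfolding cyclic_boundary_def by blast
  qed
qed


definition piV :: "nat set \<Rightarrow> nat \<Rightarrow> nat" where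
  "piV V x = Max {w\<in>V. w \<le> x}"

lemma piV_eq:
  assumes "finite V" "y \<in> V" "y \<le> x" "\<forall>w\<in>V. y < w \<longrightarrow> x < w"
  shows "piV V x = y"
  unfolding piV_def
proof (rule Max_eqI)
  show "finite {w \<in> V. w \<le> x}" using assms(1) by simp
  show "y \<in> {w \<in> V. w \<le> x}" using assms(2,3) by simp
  fix w assume "w \<in> {w \<in> V. w \<le> x}"
  then have w: "w \<in> V" "w \<le> x" by simp_all
  show "w \<le> y"
  proof (rule ccontr)
    assume "\<not> w \<le> y" then have "y < w" by simp
    then have "x < w" using assms(4) w(1) by blast
    then show False using w(2) by simp
  qed
qed

lemma piV_fix: "finite V \<Longrightarrow> x \<in> V \<Longrightarrow> piV V x = x"
  by (rule piV_eq) simp_all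

lemma piV_fix_set:
  assumes "finite V" "H \<subseteq> V" shows "piV V ` H = H"
proof -
  have "piV V ` H = id ` H"
  proof (rule image_cong[OF HOL.refl])
    fix x assume "x \<in> H" then have "x \<in> V" using assms(2) by blast
    then show "piV V x = id x" using piV_fix[OF assms(1)] by simp
  qed
  then show ?thesis by simp
qed

lemma piV_prop:
  assumes "finite V" "1 \<in> V" "1 \<le> x"
  shows "piV V x \<in> V \<and> piV V x \<le> x \<and> (\<forall>w\<in>V. w \<le> x \<longrightarrow> w \<le> piV V x)"
proof -
  have "1 \<in> {w\<in>V. w \<le> x}" using assms by simp
  then have ne: "{w\<in>V. w \<le> x} \<noteq> {}" by blast
  have f: "finite {w\<in>V. w \<le> x}" using assms by simp
  have "piV V x \<in> {w\<in>V. w \<le> x}" unfolding piV_def using Max_in[OF f ne] .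
  moreover have "\<forall>w\<in>V. w \<le> x \<longrightarrow> w \<le> piV V x"
  proof (intro ballI impI)
    fix w assume "w \<in> V" "w \<le> x"
    then have "w \<in> {w\<in>V. w \<le> x}" by simp
    then show "w \<le> piV V x" unfolding piV_def by (rule Max_ge[OF f])
  qed
  ultimately show ?thesis by simp
qed

lemma piV_remove:
  assumes fV: "finite V" and oneV: "1 \<in> V" and uV: "u \<in> V" and u1: "1 < u"
    and v: "v = Max {w\<in>V. w < u}" and x: "1 \<le> x"
  shows "piV (V - {u}) x = (if piV V x = u then v else piV V x)"
proof -
  have ne: "{w\<in>V. w < u} \<noteq> {}" using oneV u1 by auto
  have f: "finite {w\<in>V. w < u}" using fV by simp
  have vV: "v \<in> V" "v < u" using Max_in[OF f ne] v by auto
  have vmax: "\<forall>w\<in>V. w < u \<longrightarrow> w \<le> v" using Max_ge[OF f] v by auto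
  define p where "p = piV V x"
  have p: "p \<in> V" "p \<le> x" "\<forall>w\<in>V. w \<le> x \<longrightarrow> w \<le> p" using piV_prop[OF fV oneV x] p_def by auto
  have fV': "finite (V - {u})" using fV by simp
  show ?thesis
  proof (cases "p = u")
    case True
    have "piV (V - {u}) x = v"
    proof (rule piV_eq[OF fV'])
      show "v \<in> V - {u}" using vV by auto
      show "v \<le> x" using vV p True by auto
      show "\<forall>w\<in>V - {u}. v < w \<longrightarrow> x < w"
      proof (intro ballI impI)
        fix w assume w: "w \<in> V - {u}" "v < w"
        show "x < w"
        proof (rule ccontr)
          assume "\<not> x < w"
          then have "w \<le> p" using p w by auto
          then have "w < u" using True w by auto
          then show False using vmax w by auto
        qed
      qed
    qed
    then show ?thesis using True p_def by simp
  next
    case False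
    have "piV (V - {u}) x = p"
    proof (rule piV_eq[OF fV'])
      show "p \<in> V - {u}" using p False by auto
      show "p \<le> x" using p by auto
      show "\<forall>w\<in>V - {u}. p < w \<longrightarrow> x < w"
      proof (intro ballI impI)
        fix w assume w: "w \<in> V - {u}" "p < w"
        show "x < w"
        proof (rule ccontr)
          assume "\<not> x < w" then have "w \<le> x" by simp
          then have "w \<le> p" using p(3) w(1) by blast
          then show False using w(2) by simp
        qed
      qed
    qed
    then show ?thesis using False p_def by simp
  qed
qed

lemma contract_image:
  "contract K u v = (\<lambda>F. (\<lambda>x. if x = u then v else x) ` F) ` K"
proof -
  have eq: "(\<lambda>x. if x = u then v else x) ` F = (if u \<in> F then (F - {u}) \<union> {v} else F)" for F :: "nat set"
  proof (cases "u \<in> F")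
    case True
    have h: "F = insert u (F - {u})" using True by blast
    have "(\<lambda>x. if x = u then v else x) ` F = (\<lambda>x. if x = u then v else x) ` (insert u (F - {u}))"
      using h by (rule arg_cong)
    also have "\<dots> = insert v ((\<lambda>x. if x = u then v else x) ` (F - {u}))"
      by (simp only: image_insert if_True simp_thms(6))
    also have "(\<lambda>x. if x = u then v else x) ` (F - {u}) = id ` (F - {u})"
      by (rule image_cong[OF HOL.refl]) simp
    finally show ?thesis using True by simp
  next
    case False
    have "(\<lambda>x. if x = u then v else x) ` F = id ` F"
      by (rule image_cong[OF HOL.refl]) (use False in auto)
    then show ?thesis using False by simp
  qed
  show ?thesis unfolding eq
  proof (rule set_eqI, rule iffI)
    fix G assume "G \<in> contract K u v"
    then consider "G \<in> K" "u \<notin> G" | F where "F \<in> K" "u \<in> F" "G = (F - {u}) \<union> {v}"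
      unfolding contract_def by blast
    then show "G \<in> (\<lambda>F. if u \<in> F then F - {u} \<union> {v} else F) ` K"
    proof cases
      case 1 then show ?thesis by (intro image_eqI[of _ _ G]) simp_all
    next
      case 2 then show ?thesis by (intro image_eqI[of _ _ F]) simp_all
    qed
  next
    fix G assume "G \<in> (\<lambda>F. if u \<in> F then F - {u} \<union> {v} else F) ` K"
    then obtain F where F: "F \<in> K" "G = (if u \<in> F then F - {u} \<union> {v} else F)" by blast
    show "G \<in> contract K u v"
    proof (cases "u \<in> F")
      case True
      then have "G = F - {u} \<union> {v}" using F(2) by simp
      then have "G \<in> {(F - {u}) \<union> {v} | F. F \<in> K \<and> u \<in> F}" using F(1) True by blast
      then show ?thesis unfolding contract_def by (rule UnI2)
    next
      case False
      then have "G = F" using F(2) by simp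
      then have "G \<in> {F \<in> K. u \<notin> F}" using F(1) False by simp
      then show ?thesis unfolding contract_def by (rule UnI1)
    qed
  qed
qed


lemma step:
  assumes K0sub: "\<forall>F\<in>K0. F \<subseteq> {1..n}" and fK0: "finite K0" and cK0: "\<forall>F\<in>K0. card F \<le> d+1"
    and hface: "\<forall>F. F \<subseteq> {1..n} \<longrightarrow> card F \<le> d+1 \<longrightarrow> (card F \<le> d \<or> (\<exists>a. a\<in>F \<and> Suc a \<in> F)) \<longrightarrow> F \<in> K0"
    and d1: "1 \<le> d"
    and V: "V \<subseteq> {1..n}" and oneV: "1 \<in> V" and uV: "u \<in> V" and u1: "1 < u"
  shows "contraction_step ((`) (piV V) ` K0) ((`) (piV (V - {u})) ` K0)"
proof -
  let ?L = "(`) (piV V) ` K0"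
  have K0mem: "\<And>F x. F\<in>K0 \<Longrightarrow> x\<in>F \<Longrightarrow> 1 \<le> x \<and> x \<le> n"
    using K0sub by (meson atLeastAtMost_iff subsetD)
  define v where "v = Max {w\<in>V. w < u}"
  have fV: "finite V" using V finite_subset by blast
  have ne: "{w\<in>V. w < u} \<noteq> {}" using oneV u1 by auto
  have f: "finite {w\<in>V. w < u}" using fV by simp
  have vV: "v \<in> V" "v < u" using Max_in[OF f ne] v_def by auto
  have vmax: "\<forall>w\<in>V. w < u \<longrightarrow> w \<le> v" using Max_ge[OF f] v_def by auto
  define r where "r = (\<lambda>x::nat. if x = u then v else x)"
  have contr: "contract ?L u v = (`) (piV (V - {u})) ` K0"
  proof -
    have "contract ?L u v = (\<lambda>F. r ` F) ` ?L" unfolding contract_image r_def ..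
    also have "\<dots> = (\<lambda>F. r ` (piV V ` F)) ` K0" by (simp add: image_image)
    also have "\<dots> = (`) (piV (V - {u})) ` K0"
    proof (rule image_cong[OF HOL.refl])
      fix F assume F: "F \<in> K0"
      show "r ` piV V ` F = piV (V - {u}) ` F"
        unfolding image_image
      proof (rule image_cong[OF HOL.refl])
        fix x assume "x \<in> F"
        then have x: "1 \<le> x" using K0mem F by blast
        show "r (piV V x) = piV (V - {u}) x"
          using piV_remove[OF fV oneV uV u1 v_def x] r_def by simp
      qed
    qed
    finally show ?thesis .
  qed
  have imgV: "\<forall>G\<in>?L. G \<subseteq> V"
  proof
    fix G assume "G \<in> ?L"
    then obtain F where F: "F \<in> K0" "G = piV V ` F" by auto
    show "G \<subseteq> V"
    proof
      fix y assume "y \<in> G"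
      then obtain x where "x \<in> F" "y = piV V x" using F by auto
      then show "y \<in> V" using piV_prop[OF fV oneV] K0mem F by blast
    qed
  qed
  have vertsL: "verts ?L \<subseteq> V" unfolding verts_def using imgV by auto
  have single: "{x} \<in> ?L" if "x \<in> V" for x
  proof -
    have x1: "{x} \<subseteq> {1..n}" using that V by blast
    have "card {x} \<le> d" using d1 by simp
    then have "{x} \<in> K0" using hface x1 by simp
    moreover have "piV V ` {x} = {x}" using piV_fix[OF fV that] by simp
    ultimately show ?thesis by (metis image_eqI)
  qed
  have cardL: "\<forall>G\<in>?L. card G \<le> d+1"
  proof
    fix G assume "G \<in> ?L"
    then obtain F where F: "F \<in> K0" "G = piV V ` F" by auto
    have "card G \<le> card F" using F card_image_le K0sub finite_subset
      by (metis finite_atLeastAtMost)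
    then show "card G \<le> d+1" using cK0 F by auto
  qed
  have cdimL: "cdim ?L \<le> int d"
  proof -
    have "finite ?L" using fK0 by simp
    moreover have "?L \<noteq> {}" using single[OF uV] by auto
    ultimately have "Max (card ` ?L) \<le> d+1" using cardL by auto
    then show ?thesis unfolding cdim_def by simp
  qed
  have adm: "admissible_pair ?L u v"
    unfolding admissible_pair_def
  proof (intro conjI notI)
    show "u \<in> verts ?L" unfolding verts_def by (rule UnionI[OF single[OF uV]]) simp
    show "v \<in> verts ?L" unfolding verts_def by (rule UnionI[OF single[OF vV(1)]]) simp
    show "u = v \<Longrightarrow> False" using vV by simp
  next
    assume "\<exists>k M. int k \<le> cdim ?L \<and> missing_face ?L k M \<and> u \<in> M \<and> v \<in> M"
    then obtain k S where kS: "int k \<le> cdim ?L" "missing_face ?L k S" "u \<in> S" "v \<in> S" by blast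
    have SV: "S \<subseteq> V" and cS: "card S = k + 1" and SL: "S \<notin> ?L"
      using kS(2) vertsL unfolding missing_face_def by auto
    have ck: "card S \<le> d + 1" using cS kS(1) cdimL by simp
    define F where "F = insert (u - 1) (S - {v})"
    have vn: "v \<in> {1..n}" "u \<in> {1..n}" using vV(1) uV V by blast+
    then have u1n: "u - 1 \<in> {1..n}" using vV(2) by auto
    have "S - {v} \<subseteq> {1..n}" using SV V by blast
    then have Fsub: "F \<subseteq> {1..n}" using u1n unfolding F_def by blast
    have fS: "finite S" using SV fV finite_subset by blast
    have "card F \<le> card (S - {v}) + 1" unfolding F_def using fS by (simp add: card_insert_if)
    also have "\<dots> = card S" using card_Suc_Diff1[OF fS kS(4)] by simp
    finally have cF: "card F \<le> d + 1" using ck by simp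
    have "u - 1 \<in> F \<and> Suc (u - 1) \<in> F" using kS(3) vV u1 unfolding F_def by auto
    then have "card F \<le> d \<or> (\<exists>a. a\<in>F \<and> Suc a \<in> F)" by blast
    then have FK0: "F \<in> K0" by (rule hface[rule_format, OF Fsub cF])
    have pu: "piV V (u - 1) = v"
    proof (rule piV_eq[OF fV vV(1)])
      show "v \<le> u - 1" using vV by simp
      show "\<forall>w\<in>V. v < w \<longrightarrow> u - 1 < w"
      proof (intro ballI impI)
        fix w assume w: "w \<in> V" "v < w"
        then have "\<not> w < u" using vmax by (meson leD)
        then show "u - 1 < w" using u1 by simp
      qed
    qed
    have "piV V ` F = insert v (piV V ` (S - {v}))" unfolding F_def using pu by simp
    also have "piV V ` (S - {v}) = S - {v}" by (rule piV_fix_set[OF fV]) (use SV in blast)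
    finally have "piV V ` F = S" using kS(4) by auto
    then have "S \<in> ?L" using FK0 by (metis image_eqI)
    then show False using SL by simp
  qed
  show ?thesis unfolding contraction_step_def
    by (rule exI[of _ u], rule exI[of _ v]) (simp only: adm contr[symmetric] simp_thms)
qed


lemma reach:
  assumes K0sub: "\<forall>F\<in>K0. F \<subseteq> {1..n}" and fK0: "finite K0" and cK0: "\<forall>F\<in>K0. card F \<le> d+1"
    and hface: "\<forall>F. F \<subseteq> {1..n} \<longrightarrow> card F \<le> d+1 \<longrightarrow> (card F \<le> d \<or> (\<exists>a. a\<in>F \<and> Suc a \<in> F)) \<longrightarrow> F \<in> K0"
    and d1: "1 \<le> d" and oneB: "1 \<in> B"
    and fD: "finite D"
  shows "D \<subseteq> {1..n} - B \<Longrightarrow> minor_steps K0 ((`) (piV ({1..n} - D)) ` K0)"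
  using fD
proof (induction D rule: finite_induct)
  case empty
  have "(`) (piV {1..n}) ` K0 = K0"
  proof -
    have "(`) (piV {1..n}) ` K0 = (\<lambda>F. F) ` K0"
    proof (rule image_cong[OF HOL.refl])
      fix F assume F: "F \<in> K0"
      show "piV {1..n} ` F = F"
      proof (rule image_cong[OF HOL.refl, of F _ "\<lambda>x. x", simplified])
        fix x assume "x \<in> F" then have "x \<in> {1..n}" using F K0sub by blast
        then show "piV {1..n} x = x" using piV_fix[of "{1..n}"] by simp
      qed
    qed
    then show ?thesis by simp
  qed
  then show ?case using minor_steps.refl[of K0] by simp
next
  case (insert u D)
  have IH: "minor_steps K0 ((`) (piV ({1..n} - D)) ` K0)" using insert by blast
  have u: "u \<in> {1..n}" "u \<notin> B" using insert.prems by auto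
  have "contraction_step ((`) (piV ({1..n} - D)) ` K0) ((`) (piV ({1..n} - D - {u})) ` K0)"
  proof (rule step[OF K0sub fK0 cK0 hface d1])
    show "{1..n} - D \<subseteq> {1..n}" by auto
    show "1 \<in> {1..n} - D" using oneB insert.prems u by force
    show "u \<in> {1..n} - D" using u insert.hyps by auto
    show "1 < u" using u oneB by (metis atLeastAtMost_iff le_neq_implies_less)
  qed
  moreover have "{1..n} - D - {u} = {1..n} - insert u D" by auto
  ultimately show ?case using minor_steps.con[OF IH] by simp
qed

lemma iso_final:
  assumes fB: "finite B" and cB: "card B = 2*d + 3"
  shows "iso_complex {G. G \<subseteq> B \<and> card G \<le> d+1} (skeleton d (simplex (2*d + 2)))"
proof -
  have "card {0..2*d+2} = 2*d + 3" by simp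
  then obtain f where f: "bij_betw f B {0..2*d+2}"
    using finite_same_card_bij[OF fB, of "{0..2*d+2}"] cB by auto
  have inj: "inj_on f B" and fB': "f ` B = {0..2*d+2}" using f unfolding bij_betw_def by blast+
  have verts: "verts {G. G \<subseteq> B \<and> card G \<le> d+1} = B"
    unfolding verts_def
  proof
    show "\<Union> {G. G \<subseteq> B \<and> card G \<le> d + 1} \<subseteq> B" by auto
    show "B \<subseteq> \<Union> {G. G \<subseteq> B \<and> card G \<le> d + 1}"
    proof
      fix b assume "b \<in> B"
      then have "{b} \<in> {G. G \<subseteq> B \<and> card G \<le> d + 1}" by simp
      then show "b \<in> \<Union> {G. G \<subseteq> B \<and> card G \<le> d + 1}" by blast
    qed
  qed
  have "(`) f ` {G. G \<subseteq> B \<and> card G \<le> d+1} = skeleton d (simplex (2*d + 2))"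
    unfolding skeleton_def simplex_def
  proof
    show "(`) f ` {G. G \<subseteq> B \<and> card G \<le> d + 1} \<subseteq> {F \<in> Pow {0..2 * d + 2}. card F \<le> d + 1}"
    proof
      fix H assume "H \<in> (`) f ` {G. G \<subseteq> B \<and> card G \<le> d + 1}"
      then obtain G where G: "G \<subseteq> B" "card G \<le> d+1" "H = f ` G" by auto
      have "card H = card G" using G inj by (simp add: card_image inj_on_subset)
      moreover have "H \<subseteq> {0..2*d+2}" using G fB' by auto
      ultimately show "H \<in> {F \<in> Pow {0..2 * d + 2}. card F \<le> d + 1}" using G by simp
    qed
    show "{F \<in> Pow {0..2 * d + 2}. card F \<le> d + 1} \<subseteq> (`) f ` {G. G \<subseteq> B \<and> card G \<le> d + 1}"
    proof
      fix H assume H: "H \<in> {F \<in> Pow {0..2 * d + 2}. card F \<le> d + 1}"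
      then have "H \<subseteq> f ` B" using fB' by auto
      then obtain G where G: "G \<subseteq> B" "H = f ` G" by (auto simp: subset_image_iff)
      have "card H = card G" using G inj by (simp add: card_image inj_on_subset)
      then show "H \<in> (`) f ` {G. G \<subseteq> B \<and> card G \<le> d + 1}" using G H by auto
    qed
  qed
  then show ?thesis unfolding iso_complex_def verts using inj by blast
qed


lemma cover:
  assumes hfull: "\<forall>F. F \<subseteq> {1..n} \<longrightarrow> card F \<le> d+1 \<longrightarrow> (card F \<le> d \<or> 1 \<in> F \<or> n \<in> F \<or> (\<exists>a. a\<in>F \<and> Suc a \<in> F)) \<longrightarrow> F \<in> K0"
    and MK0: "M \<in> K0" and Msub: "M \<subseteq> {1..n}" and cM: "card M = d+1"
    and M1: "1 \<notin> M" and Mn: "n \<notin> M" and Msep: "\<forall>m\<in>M. Suc m \<notin> M"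
    and B: "B = insert 1 (M \<union> Suc ` M)"
    and G: "G \<subseteq> B" and cG: "card G \<le> d+1"
  shows "G \<in> (`) (piV B) ` K0"
proof -
  have fM: "finite M" using Msub finite_subset by blast
  have fB: "finite B" using B fM by simp
  have Bsub: "B \<subseteq> {1..n}"
  proof
    fix x assume "x \<in> B"
    then consider "x = 1" | "x \<in> M" | m where "m \<in> M" "x = Suc m" using B by auto
    then show "x \<in> {1..n}"
    proof cases
      case 1 then show ?thesis using Msub cM by (cases "M = {}") auto
    next
      case 2 then show ?thesis using Msub by blast
    next
      case 3
      then have "m \<in> {1..n}" "m \<noteq> n" using Msub Mn by auto
      then show ?thesis using 3 by simp
    qed
  qed
  have fG: "finite G" using G fB finite_subset by blast
  have fixB: "\<And>H. H \<subseteq> B \<Longrightarrow> piV B ` H = H"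
    using piV_fix_set[OF fB] by blast
  have ok: "G \<in> (`) (piV B) ` K0" if "F \<subseteq> {1..n}" "card F \<le> d+1"
      "card F \<le> d \<or> 1 \<in> F \<or> n \<in> F \<or> (\<exists>a. a\<in>F \<and> Suc a \<in> F)" "piV B ` F = G" for F
  proof -
    have "F \<in> K0" using hfull that by blast
    then show ?thesis using that(4) by blast
  qed
  show ?thesis
  proof (cases "card G \<le> d \<or> 1 \<in> G \<or> (\<exists>a. a\<in>G \<and> Suc a \<in> G) \<or> G = M")
    case True
    show ?thesis
    proof (cases "G = M")
      case True
      moreover have "piV B ` M = M" using fixB B by auto
      ultimately show ?thesis using MK0 by (metis image_eqI)
    next
      case False
      then have "card G \<le> d \<or> 1 \<in> G \<or> (\<exists>a. a\<in>G \<and> Suc a \<in> G)" using \<open>card G \<le> d \<or> 1 \<in> G \<or> (\<exists>a. a\<in>G \<and> Suc a \<in> G) \<or> G = M\<close> by blast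
      then show ?thesis using ok[of G] fixB[OF G] G Bsub cG by blast
    qed
  next
    case False
    have cG1: "card G = d+1" using False cG by simp
    have noadj: "\<forall>a\<in>G. Suc a \<notin> G" using False by blast
    have GMS: "G \<subseteq> M \<union> Suc ` M" using G B False by auto
    define h where "h = (\<lambda>x. if x \<in> M then x else x - 1)"
    have hG: "h ` G \<subseteq> M" using GMS unfolding h_def by auto
    have inj: "inj_on h G"
    proof
      fix x y assume xy: "x \<in> G" "y \<in> G" "h x = h y"
      show "x = y"
      proof (cases "x \<in> M"; cases "y \<in> M")
        assume "x \<in> M" "y \<in> M" then show ?thesis using xy h_def by simp
      next
        assume a: "x \<in> M" "y \<notin> M"
        then obtain m where "y = Suc m" using GMS xy by auto
        then have "y = Suc x" using xy a h_def by simp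
        then show ?thesis using noadj xy by blast
      next
        assume a: "x \<notin> M" "y \<in> M"
        then obtain m where "x = Suc m" using GMS xy by auto
        then have "x = Suc y" using xy a h_def by simp
        then show ?thesis using noadj xy by blast
      next
        assume a: "x \<notin> M" "y \<notin> M"
        obtain m where "x = Suc m" using GMS xy a by auto
        moreover obtain m' where "y = Suc m'" using GMS xy a by auto
        ultimately show ?thesis using xy a h_def by simp
      qed
    qed
    have hGM: "h ` G = M"
      using card_subset_eq[OF fM hG] card_image[OF inj] cG1 cM by simp
    have "\<not> G \<subseteq> M"
    proof
      assume "G \<subseteq> M"
      then have "G = M" using card_subset_eq[OF fM] cG1 cM by simp
      then show False using False by simp
    qed
    then obtain y where y: "y \<in> G" "y \<notin> M" by auto
    then obtain m where m: "m \<in> M" "y = Suc m" using GMS by auto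
    define Y where "Y = {m\<in>M. Suc m \<in> G}"
    have fY: "finite Y" using fM Y_def by simp
    have Yne: "Y \<noteq> {}" using m y Y_def by auto
    define m0 where "m0 = Max Y"
    have m0: "m0 \<in> M" "Suc m0 \<in> G" using Max_in[OF fY Yne] m0_def Y_def by auto
    have m0max: "\<forall>m\<in>M. Suc m \<in> G \<longrightarrow> m \<le> m0" using Max_ge[OF fY] m0_def Y_def by auto
    define b where "b = Suc m0"
    have bB: "b \<in> B" using m0 B b_def by auto
    have bG: "b \<in> G" using m0 b_def by simp
    have m0n: "m0 \<in> {1..n}" using m0 Msub by auto
    have Ble: "\<forall>w\<in>B. w \<le> Suc (Max M)"
      using B Max_ge[OF fM] by (auto simp: le_SucI)
    show ?thesis
    proof (cases "m0 = Max M")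
      case True
      define F where "F = insert n (G - {b})"
      have pn: "piV B n = b"
      proof (rule piV_eq[OF fB bB])
        show "b \<le> n" using bB Bsub by auto
        show "\<forall>w\<in>B. b < w \<longrightarrow> n < w" using Ble True b_def by auto
      qed
      have "card F \<le> card (G - {b}) + 1" unfolding F_def using fG by (simp add: card_insert_if)
      also have "\<dots> = card G" using card_Suc_Diff1[OF fG bG] by simp
      finally have cF: "card F \<le> d+1" using cG1 by simp
      have Fsub: "F \<subseteq> {1..n}" unfolding F_def using G Bsub m0n by auto
      have "piV B ` F = insert b (piV B ` (G - {b}))" unfolding F_def using pn by simp
      also have "piV B ` (G - {b}) = G - {b}" using fixB G by auto
      finally have "piV B ` F = G" using bG by auto
      then show ?thesis using ok[OF Fsub cF] F_def by simp
    next
      case False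
      define Z where "Z = {m\<in>M. m0 < m}"
      have fZ: "finite Z" using fM Z_def by simp
      have "m0 \<le> Max M" using Max_ge[OF fM m0(1)] .
      then have Zne: "Z \<noteq> {}" using False Max_in[OF fM] m0 Z_def by force
      define m' where "m' = Min Z"
      have m': "m' \<in> M" "m0 < m'" using Min_in[OF fZ Zne] m'_def Z_def by auto
      have m'min: "\<forall>w\<in>M. m0 < w \<longrightarrow> m' \<le> w" using Min_le[OF fZ] m'_def Z_def by auto
      have m'G: "m' \<in> G"
      proof -
        obtain g where g: "g \<in> G" "h g = m'" using hGM m'(1) by force
        show ?thesis
        proof (cases "g \<in> M")
          case True then show ?thesis using g h_def by simp
        next
          case gM: False
          then obtain k where k: "k \<in> M" "g = Suc k" using GMS g by auto
          then have "k = m'" using g gM h_def by simp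
          then have "m' \<le> m0" using m0max k g by blast
          then show ?thesis using m' by simp
        qed
      qed
      have "m' \<noteq> Suc m0" using Msep m0 m' by auto
      then have m'2: "Suc m0 < m'" using m' by simp
      define F where "F = insert (m' - 1) (G - {b})"
      have pm: "piV B (m' - 1) = b"
      proof (rule piV_eq[OF fB bB])
        show "b \<le> m' - 1" using m'2 b_def by simp
        show "\<forall>w\<in>B. b < w \<longrightarrow> m' - 1 < w"
        proof (intro ballI impI)
          fix w assume w: "w \<in> B" "b < w"
          then consider "w = 1" | "w \<in> M" | k where "k \<in> M" "w = Suc k" using B by auto
          then show "m' - 1 < w"
          proof cases
            case 1 then show ?thesis using w b_def by simp
          next
            case 2 then have "m' \<le> w" using m'min w b_def by simp
            then show ?thesis using m'2 by simp
          next
            case 3 then have "m' \<le> k" using m'min w b_def by simp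
            then show ?thesis using 3 by simp
          qed
        qed
      qed
      have "card F \<le> card (G - {b}) + 1" unfolding F_def using fG by (simp add: card_insert_if)
      also have "\<dots> = card G" using card_Suc_Diff1[OF fG bG] by simp
      finally have cF: "card F \<le> d+1" using cG1 by simp
      have m'n: "m' \<in> {1..n}" using m' Msub by auto
      have Fsub: "F \<subseteq> {1..n}" unfolding F_def using G Bsub m'n m'2 by auto
      have m'b: "m' \<noteq> b" using m'2 b_def by simp
      have adj: "m' - 1 \<in> F \<and> Suc (m' - 1) \<in> F" unfolding F_def using m'G m'b m'2 by auto
      have "piV B ` F = insert b (piV B ` (G - {b}))" unfolding F_def using pm by simp
      also have "piV B ` (G - {b}) = G - {b}" using fixB G by auto
      finally have "piV B ` F = G" using bG by auto
      then show ?thesis using ok[OF Fsub cF] adj by blast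
    qed
  qed
qed


theorem lemma2p13:
  fixes d n :: nat and M :: "nat set"
  assumes "d \<ge> 1" and "n \<ge> 2*d + 3"
    and "missing_face (cyclic_boundary d n) d M"
  shows "is_minor (skeleton d (simplex (2*d + 2)))
                  (skeleton d (cyclic_boundary d n) \<union> {M})"
proof -
  define K0 where "K0 = skeleton d (cyclic_boundary d n) \<union> {M}"
  have cbsub: "\<forall>F\<in>cyclic_boundary d n. F \<subseteq> {1..n}"
    unfolding cyclic_boundary_def gale_facet_def by blast
  have mf: "M \<subseteq> verts (cyclic_boundary d n)" "card M = d+1" "M \<notin> cyclic_boundary d n"
    using assms(3) unfolding missing_face_def by auto
  have Msub: "M \<subseteq> {1..n}" using mf(1) cbsub unfolding verts_def by blast
  have n2: "2*d+1 \<le> n" using assms(2) by simp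
  have hfull: "\<forall>F. F \<subseteq> {1..n} \<longrightarrow> card F \<le> d+1 \<longrightarrow> (card F \<le> d \<or> 1 \<in> F \<or> n \<in> F \<or> (\<exists>a. a\<in>F \<and> Suc a \<in> F)) \<longrightarrow> F \<in> K0"
  proof (intro allI impI)
    fix F assume F: "F \<subseteq> {1..n}" "card F \<le> d+1" "card F \<le> d \<or> 1 \<in> F \<or> n \<in> F \<or> (\<exists>a. a\<in>F \<and> Suc a \<in> F)"
    have "F \<in> cyclic_boundary d n" by (rule face[OF n2 F(1) F(2) F(3)])
    then show "F \<in> K0" using F(2) unfolding K0_def skeleton_def by simp
  qed
  have hface: "\<forall>F. F \<subseteq> {1..n} \<longrightarrow> card F \<le> d+1 \<longrightarrow> (card F \<le> d \<or> (\<exists>a. a\<in>F \<and> Suc a \<in> F)) \<longrightarrow> F \<in> K0"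
    using hfull by blast
  have K0sub: "\<forall>F\<in>K0. F \<subseteq> {1..n}"
  proof
    fix F assume "F \<in> K0"
    then have "F \<in> cyclic_boundary d n \<or> F = M" unfolding K0_def skeleton_def by blast
    then show "F \<subseteq> {1..n}" using cbsub Msub by blast
  qed
  have fK0: "finite K0"
  proof -
    have "K0 \<subseteq> Pow {1..n}" using K0sub by blast
    then show ?thesis by (rule finite_subset) simp
  qed
  have cK0: "\<forall>F\<in>K0. card F \<le> d+1" using mf(2) unfolding K0_def skeleton_def by auto
  have MK0: "M \<in> K0" unfolding K0_def by simp
  have M1: "1 \<notin> M"
  proof
    assume "1 \<in> M" then have "M \<in> cyclic_boundary d n" using face[OF n2 Msub] mf(2) by simp
    then show False using mf(3) by simp
  qed
  have Mn: "n \<notin> M"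
  proof
    assume "n \<in> M" then have "M \<in> cyclic_boundary d n" using face[OF n2 Msub] mf(2) by simp
    then show False using mf(3) by simp
  qed
  have Msep: "\<forall>m\<in>M. Suc m \<notin> M"
  proof (intro ballI notI)
    fix m assume "m \<in> M" "Suc m \<in> M"
    then have "M \<in> cyclic_boundary d n" using face[OF n2 Msub] mf(2) by auto
    then show False using mf(3) by simp
  qed
  have fM: "finite M" using Msub finite_subset by blast
  define B where "B = insert 1 (M \<union> Suc ` M)"
  have fB: "finite B" using B_def fM by simp
  have oneB: "1 \<in> B" using B_def by simp
  have Bsub: "B \<subseteq> {1..n}"
  proof
    fix x assume "x \<in> B"
    then consider "x = 1" | "x \<in> M" | m where "m \<in> M" "x = Suc m" using B_def by auto
    then show "x \<in> {1..n}"
    proof cases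
      case 1 then show ?thesis using n2 by simp
    next
      case 2 then show ?thesis using Msub by blast
    next
      case 3
      then have "m \<in> {1..n}" "m \<noteq> n" using Msub Mn by auto
      then show ?thesis using 3 by simp
    qed
  qed
  have cB: "card B = 2*d + 3"
  proof -
    have "1 \<notin> M \<union> Suc ` M" using M1 Msub by auto
    moreover have "M \<inter> Suc ` M = {}" using Msep by auto
    moreover have "card (Suc ` M) = card M" by (simp add: card_image)
    ultimately show ?thesis unfolding B_def using fM mf(2) by (simp add: card_Un_disjoint)
  qed
  define LB where "LB = (`) (piV B) ` K0"
  have "minor_steps K0 ((`) (piV ({1..n} - ({1..n} - B))) ` K0)"
    by (rule reach[OF K0sub fK0 cK0 hface assms(1) oneB]) auto
  moreover have "{1..n} - ({1..n} - B) = B" using Bsub by auto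
  ultimately have ms: "minor_steps K0 LB" unfolding LB_def by simp
  define T where "T = {G. G \<subseteq> B \<and> card G \<le> d+1}"
  have TL: "T \<subseteq> LB"
  proof
    fix G assume "G \<in> T"
    then have G: "G \<subseteq> B" "card G \<le> d+1" unfolding T_def by auto
    show "G \<in> LB" unfolding LB_def by (rule cover[OF hfull MK0 Msub mf(2) M1 Mn Msep B_def G])
  qed
  have scT: "simplicial_complex T"
    unfolding simplicial_complex_def T_def
  proof (intro conjI ballI allI impI)
    show "finite {G. G \<subseteq> B \<and> card G \<le> d + 1}"
      by (rule finite_subset[of _ "Pow B"]) (auto simp: fB)
  next
    fix F assume "F \<in> {G. G \<subseteq> B \<and> card G \<le> d + 1}"
    then show "finite F" using fB finite_subset by blast
  next
    fix F G assume F: "F \<in> {G. G \<subseteq> B \<and> card G \<le> d + 1}" and "G \<subseteq> F"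
    moreover have "finite F" using F fB finite_subset by blast
    ultimately show "G \<in> {G. G \<subseteq> B \<and> card G \<le> d + 1}"
      using card_mono[of F G] by auto
  qed
  have "minor_steps K0 T"
    using minor_steps.del[OF ms] scT TL unfolding deletion_step_def by blast
  moreover have "iso_complex T (skeleton d (simplex (2*d + 2)))"
    unfolding T_def by (rule iso_final[OF fB cB])
  ultimately have "is_minor (skeleton d (simplex (2*d + 2))) K0" unfolding is_minor_def by blast
  then show ?thesis unfolding K0_def .
qed

end
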